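(* Let $G$ be an undirected graph with double cover $H$. For any nonempty simple set $S\subset V_H$, let $L=\{u:u_1\in S\}$ and $R=\{u:u_2\in S\}$. Then $\beta_G(L,R)=\Phi_H(S)$.
   Context: $G$ is unweighted; $\mathrm{vol}(S)=\sum_{v\in S}\deg(v)$; $e(A,B)$ is the number of edges between disjoint $A,B$. $\beta_G(L,R)=1-\frac{2e(L,R)}{\mathrm{vol}(L\cup R)}$. Conductance: $\Phi_H(S)=\frac{|\partial S|}{\min\{\mathrm{vol}(S),\mathrm{vol}(V_H\setminus S)\}}$. The double cover $H$ has vertices $v_1,v_2$ for each $v\in V_G$ and edges $\{u_1,v_2\},\{u_2,v_1\}$ for each $\{u,v\}\in E_G$. A set $S\subset V_H$ is simple if $|\{v_1,v_2\}\cap S|\le1$ for all $v\in V_G$. *)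

theory Defs
  imports Main Complex_Main
begin

definition ugraph :: "'a set \<Rightarrow> 'a set set \<Rightarrow> bool" where
  "ugraph V E \<longleftrightarrow> finite V \<and> (\<forall>e\<in>E. \<exists>u v. e = {u, v} \<and> u \<noteq> v \<and> u \<in> V \<and> v \<in> V)"

definition deg :: "'a set set \<Rightarrow> 'a \<Rightarrow> nat" where
  "deg E v = card {e \<in> E. v \<in> e}"

definition vol :: "'a set set \<Rightarrow> 'a set \<Rightarrow> nat" where
  "vol E S = (\<Sum>v\<in>S. deg E v)"

definition e_between :: "'a set set \<Rightarrow> 'a set \<Rightarrow> 'a set \<Rightarrow> nat" where
  "e_between E A B = card {e \<in> E. \<exists>u\<in>A. \<exists>v\<in>B. e = {u, v}}"

definition beta :: "'a set set \<Rightarrow> 'a set \<Rightarrow> 'a set \<Rightarrow> real" where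
  "beta E L R = 1 - 2 * real (e_between E L R) / real (vol E (L \<union> R))"

definition boundary :: "'a set \<Rightarrow> 'a set set \<Rightarrow> 'a set \<Rightarrow> 'a set set" where
  "boundary V E S = {e \<in> E. \<exists>x\<in>S. \<exists>y\<in>V - S. e = {x, y}}"

definition conductance :: "'a set \<Rightarrow> 'a set set \<Rightarrow> 'a set \<Rightarrow> real" where
  "conductance V E S = real (card (boundary V E S)) / real (min (vol E S) (vol E (V - S)))"

text \<open>Double cover: vertex v_i is represented as (v, i), i \<in> {1,2}.\<close>
definition cover_V :: "'a set \<Rightarrow> ('a \<times> nat) set" where
  "cover_V V = V \<times> {1, 2}"

definition cover_E :: "'a set set \<Rightarrow> ('a \<times> nat) set set" where
  "cover_E E = {{(u, 1), (v, 2)} | u v. {u, v} \<in> E}"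

definition simple_set :: "'a set \<Rightarrow> ('a \<times> nat) set \<Rightarrow> bool" where
  "simple_set V S \<longleftrightarrow> (\<forall>v\<in>V. card ({(v, 1), (v, 2)} \<inter> S) \<le> 1)"

end

theory Submission
  imports Defs
begin

lemma ug_fin_E: "ugraph V E \<Longrightarrow> finite E"
proof -
  assume u: "ugraph V E"
  have "E \<subseteq> Pow V" using u unfolding ugraph_def by auto
  moreover have "finite V" using u unfolding ugraph_def by auto
  ultimately show ?thesis using finite_subset by blast
qed

lemma ug_end: "ugraph V E \<Longrightarrow> {a, b} \<in> E \<Longrightarrow> a \<in> V \<and> b \<in> V"
  unfolding ugraph_def by (metis insertCI insertE singletonD)

lemma deg_eq: assumes u: "ugraph V E" shows "deg E v = card {w\<in>V. {v, w} \<in> E}"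
proof -
  have "bij_betw (\<lambda>w. {v, w}) {w\<in>V. {v, w} \<in> E} {e\<in>E. v \<in> e}"
    unfolding bij_betw_def
  proof
    show "inj_on (\<lambda>w. {v, w}) {w \<in> V. {v, w} \<in> E}"
      by (auto simp: inj_on_def doubleton_eq_iff)
    show "(\<lambda>w. {v, w}) ` {w \<in> V. {v, w} \<in> E} = {e \<in> E. v \<in> e}"
    proof
      show "(\<lambda>w. {v, w}) ` {w \<in> V. {v, w} \<in> E} \<subseteq> {e \<in> E. v \<in> e}" by auto
      show "{e \<in> E. v \<in> e} \<subseteq> (\<lambda>w. {v, w}) ` {w \<in> V. {v, w} \<in> E}"
      proof
        fix e assume e: "e \<in> {e \<in> E. v \<in> e}"
        have eE: "e \<in> E" and ve: "v \<in> e" using e by auto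
        have "\<exists>a b. e = {a, b} \<and> a \<noteq> b \<and> a \<in> V \<and> b \<in> V"
          using u eE unfolding ugraph_def by (elim conjE ballE) auto
        then obtain a b where ab: "e = {a, b}" "a \<in> V" "b \<in> V" by blast
        show "e \<in> (\<lambda>w. {v, w}) ` {w \<in> V. {v, w} \<in> E}"
        proof (cases "v = a")
          case True
          then have "e = {v, b}" using ab by simp
          then show ?thesis using eE ab(3) by (intro rev_image_eqI[of b]) auto
        next
          case False then have "v = b" using ve ab by auto
          then have "e = {v, a}" using ab by (simp add: insert_commute)
          then show ?thesis using eE ab(2) by (intro rev_image_eqI[of a]) auto
        qed
      qed
    qed
  qed
  then show ?thesis unfolding deg_def by (simp add: bij_betw_same_card)
qed

lemma degH1: assumes u: "ugraph V E"
  shows "deg (cover_E E) (v, 1) = card {w\<in>V. {v, w} \<in> E}"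
proof -
  have "bij_betw (\<lambda>w. {(v,1::nat), (w,2::nat)}) {w\<in>V. {v, w} \<in> E} {e\<in>cover_E E. (v,1) \<in> e}"
    unfolding bij_betw_def
  proof
    show "inj_on (\<lambda>w. {(v,1::nat), (w,2::nat)}) {w \<in> V. {v, w} \<in> E}"
      by (auto simp: inj_on_def doubleton_eq_iff)
    show "(\<lambda>w. {(v,1::nat), (w,2::nat)}) ` {w \<in> V. {v, w} \<in> E} = {e\<in>cover_E E. (v,1) \<in> e}"
    proof
      show "(\<lambda>w. {(v,1::nat), (w,2::nat)}) ` {w \<in> V. {v, w} \<in> E} \<subseteq> {e\<in>cover_E E. (v,1) \<in> e}"
        unfolding cover_E_def by blast
      show "{e\<in>cover_E E. (v,1) \<in> e} \<subseteq> (\<lambda>w. {(v,1::nat), (w,2::nat)}) ` {w \<in> V. {v, w} \<in> E}"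
      proof
        fix e assume e: "e \<in> {e\<in>cover_E E. (v,1) \<in> e}"
        then obtain a b where ab: "e = {(a,1), (b,2)}" "{a,b} \<in> E"
          unfolding cover_E_def by blast
        have "b \<in> V" using ug_end[OF u ab(2)] by blast
        moreover have "a = v" using e ab by auto
        ultimately show "e \<in> (\<lambda>w. {(v,1::nat), (w,2::nat)}) ` {w \<in> V. {v, w} \<in> E}"
          using ab by auto
      qed
    qed
  qed
  then show ?thesis unfolding deg_def by (simp add: bij_betw_same_card)
qed

lemma degH2: assumes u: "ugraph V E"
  shows "deg (cover_E E) (v, 2) = card {w\<in>V. {v, w} \<in> E}"
proof -
  have "bij_betw (\<lambda>w. {(w,1::nat), (v,2::nat)}) {w\<in>V. {v, w} \<in> E} {e\<in>cover_E E. (v,2) \<in> e}"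
    unfolding bij_betw_def
  proof
    show "inj_on (\<lambda>w. {(w,1::nat), (v,2::nat)}) {w \<in> V. {v, w} \<in> E}"
      by (auto simp: inj_on_def doubleton_eq_iff)
    show "(\<lambda>w. {(w,1::nat), (v,2::nat)}) ` {w \<in> V. {v, w} \<in> E} = {e\<in>cover_E E. (v,2) \<in> e}"
    proof
      show "(\<lambda>w. {(w,1::nat), (v,2::nat)}) ` {w \<in> V. {v, w} \<in> E} \<subseteq> {e\<in>cover_E E. (v,2) \<in> e}"
        unfolding cover_E_def by (auto simp: insert_commute)
      show "{e\<in>cover_E E. (v,2) \<in> e} \<subseteq> (\<lambda>w. {(w,1::nat), (v,2::nat)}) ` {w \<in> V. {v, w} \<in> E}"
      proof
        fix e assume e: "e \<in> {e\<in>cover_E E. (v,2) \<in> e}"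
        then obtain a b where ab: "e = {(a,1), (b,2)}" "{a,b} \<in> E"
          unfolding cover_E_def by blast
        have "a \<in> V" using ug_end[OF u ab(2)] by blast
        moreover have "b = v" using e ab by auto
        ultimately show "e \<in> (\<lambda>w. {(w,1::nat), (v,2::nat)}) ` {w \<in> V. {v, w} \<in> E}"
          using ab by (auto simp: insert_commute)
      qed
    qed
  qed
  then show ?thesis unfolding deg_def by (simp add: bij_betw_same_card)
qed

lemma degH: assumes u: "ugraph V E" and x: "x \<in> cover_V V"
  shows "deg (cover_E E) x = deg E (fst x)"
proof -
  obtain v i where "x = (v, i)" "i = 1 \<or> i = 2" using x unfolding cover_V_def by auto
  then show ?thesis using degH1[OF u] degH2[OF u] deg_eq[OF u] by auto
qed

lemma aux: "(x::real) > 0 \<Longrightarrow> 1 - y / x = (x - y) / x"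
  by (simp add: diff_divide_distrib)

theorem lemma2:
  fixes V :: "'a set" and E :: "'a set set" and S :: "('a \<times> nat) set"
  assumes "ugraph V E"
    and "S \<subseteq> cover_V V" and "S \<noteq> {}" and "simple_set V S"
    and "vol (cover_E E) S > 0"
  shows "beta E {u. (u, 1) \<in> S} {u. (u, 2) \<in> S}
         = conductance (cover_V V) (cover_E E) S"
proof -
  note u = assms(1)
  define L where "L = {u. (u, 1::nat) \<in> S}"
  define R where "R = {u. (u, 2::nat) \<in> S}"
  define N where "N = (\<lambda>v. {w\<in>V. {v, w} \<in> E})"
  have finV: "finite V" using u unfolding ugraph_def by auto
  have LV: "L \<subseteq> V" and RV: "R \<subseteq> V" using assms(2) unfolding L_def R_def cover_V_def by auto
  have finL: "finite L" and finR: "finite R" using LV RV finV finite_subset by auto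
  have both: False if "(v, 1) \<in> S" "(v, 2) \<in> S" for v
  proof -
    have "v \<in> V" using that assms(2) unfolding cover_V_def by auto
    then have "card ({(v, 1), (v, 2)} \<inter> S) \<le> 1" using assms(4) unfolding simple_set_def by blast
    moreover have "{(v, 1::nat), (v, 2::nat)} \<inter> S = {(v, 1), (v, 2)}" using that by auto
    ultimately show False by simp
  qed
  have LR: "L \<inter> R = {}" using both unfolding L_def R_def by auto
  have finS: "finite S" using assms(2) finV unfolding cover_V_def by (meson finite_SigmaI finite_insert finite.emptyI finite_subset)
  have injS: "inj_on fst S"
  proof (rule inj_onI)
    fix x y assume xy: "x \<in> S" "y \<in> S" "fst x = fst y"
    obtain a i where x: "x = (a, i)" "i = 1 \<or> i = 2" using xy assms(2) unfolding cover_V_def by auto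
    obtain b j where y: "y = (b, j)" "j = 1 \<or> j = 2" using xy assms(2) unfolding cover_V_def by auto
    show "x = y" using x y xy both by auto
  qed
  have fstS: "fst ` S = L \<union> R"
  proof
    show "fst ` S \<subseteq> L \<union> R"
    proof
      fix w assume "w \<in> fst ` S"
      then obtain x where x: "x \<in> S" "w = fst x" by auto
      then obtain i where "x = (w, i)" "i = 1 \<or> i = 2" using assms(2) unfolding cover_V_def by auto
      then show "w \<in> L \<union> R" using x unfolding L_def R_def by auto
    qed
    show "L \<union> R \<subseteq> fst ` S" unfolding L_def R_def by force
  qed
  have volS: "vol (cover_E E) S = vol E (L \<union> R)"
  proof -
    have "vol (cover_E E) S = (\<Sum>x\<in>S. deg E (fst x))"
      unfolding vol_def using degH[OF u] assms(2) by (auto intro!: sum.cong)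
    also have "\<dots> = (\<Sum>w\<in>fst ` S. deg E w)" using sum.reindex[OF injS, of "deg E"] by (simp add: comp_def)
    finally show ?thesis using fstS unfolding vol_def by simp
  qed
  have volLR: "vol E (L \<union> R) = vol E L + vol E R"
    unfolding vol_def using sum.union_disjoint[OF finL finR LR] by simp
  define PL where "PL = {p\<in>V\<times>V. {fst p, snd p} \<in> E \<and> fst p \<in> L}"
  define PR where "PR = {p\<in>V\<times>V. {fst p, snd p} \<in> E \<and> snd p \<in> R}"
  define PE where "PE = {p\<in>V\<times>V. {fst p, snd p} \<in> E \<and> fst p \<in> L \<and> snd p \<in> R}"
  define PB where "PB = {p\<in>V\<times>V. {fst p, snd p} \<in> E \<and> (fst p \<in> L) \<noteq> (snd p \<in> R)}"
  have finVV: "finite (V \<times> V)" using finV by simp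
  have finPL: "finite PL" and finPR: "finite PR" and finPE: "finite PE" and finPB: "finite PB"
    unfolding PL_def PR_def PE_def PB_def using finVV by auto
  have c1: "card PL + card PR = card PB + 2 * card PE"
  proof -
    have "card PL + card PR = card (PL \<union> PR) + card (PL \<inter> PR)"
      using card_Un_Int[OF finPL finPR] .
    moreover have "PL \<inter> PR = PE" unfolding PL_def PR_def PE_def by auto
    moreover have "PL \<union> PR = PB \<union> PE" unfolding PL_def PR_def PE_def PB_def by auto
    moreover have "card (PB \<union> PE) = card PB + card PE"
      using card_Un_disjoint[OF finPB finPE] unfolding PB_def PE_def by auto
    ultimately show ?thesis by simp
  qed
  have vL: "vol E L = card PL"
  proof -
    have "vol E L = (\<Sum>a\<in>L. card (N a))" unfolding vol_def N_def using deg_eq[OF u] by simp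
    also have "\<dots> = card (Sigma L N)" using finL finV unfolding N_def by (subst card_SigmaI) auto
    also have "Sigma L N = PL" unfolding PL_def N_def using LV by auto
    finally show ?thesis .
  qed
  have vR: "vol E R = card PR"
  proof -
    have "vol E R = (\<Sum>a\<in>R. card (N a))" unfolding vol_def N_def using deg_eq[OF u] by simp
    also have "\<dots> = card (Sigma R N)" using finR finV unfolding N_def by (subst card_SigmaI) auto
    also have "\<dots> = card (prod.swap ` Sigma R N)" by (simp add: card_image)
    also have "prod.swap ` Sigma R N = PR" unfolding PR_def N_def using RV
      by (auto simp: insert_commute image_iff)
    finally show ?thesis .
  qed
  have eE: "e_between E L R = card PE"
  proof -
    have inj: "inj_on (\<lambda>p. {fst p, snd p}) PE"
    proof (rule inj_onI)
      fix p q assume pq: "p \<in> PE" "q \<in> PE" "{fst p, snd p} = {fst q, snd q}"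
      obtain a b where p: "p = (a, b)" by (cases p)
      obtain c d where q: "q = (c, d)" by (cases q)
      have abcd: "a \<in> L" "b \<in> R" "c \<in> L" "d \<in> R" using pq p q unfolding PE_def by auto
      have "{a, b} = {c, d}" using pq p q by simp
      then have "(a = c \<and> b = d) \<or> (a = d \<and> b = c)" by (simp add: doubleton_eq_iff)
      moreover have "a \<noteq> d" using abcd LR by blast
      ultimately show "p = q" using p q by simp
    qed
    have "(\<lambda>p. {fst p, snd p}) ` PE = {e \<in> E. \<exists>u\<in>L. \<exists>v\<in>R. e = {u, v}}"
    proof
      show "(\<lambda>p. {fst p, snd p}) ` PE \<subseteq> {e \<in> E. \<exists>u\<in>L. \<exists>v\<in>R. e = {u, v}}"
        unfolding PE_def by blast
      show "{e \<in> E. \<exists>u\<in>L. \<exists>v\<in>R. e = {u, v}} \<subseteq> (\<lambda>p. {fst p, snd p}) ` PE"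
      proof
        fix e assume "e \<in> {e \<in> E. \<exists>u\<in>L. \<exists>v\<in>R. e = {u, v}}"
        then obtain a b where ab: "e \<in> E" "a \<in> L" "b \<in> R" "e = {a, b}" by blast
        have "(a, b) \<in> PE" unfolding PE_def using ab LV RV by auto
        then show "e \<in> (\<lambda>p. {fst p, snd p}) ` PE" using ab(4) by (intro rev_image_eqI[of "(a, b)"]) auto
      qed
    qed
    then show ?thesis unfolding e_between_def using card_image[OF inj] by simp
  qed
  have bB: "card (boundary (cover_V V) (cover_E E) S) = card PB"
  proof -
    have inj: "inj_on (\<lambda>p. {(fst p, 1::nat), (snd p, 2::nat)}) PB"
    proof (rule inj_onI)
      fix p q assume pq: "{(fst p, 1::nat), (snd p, 2::nat)} = {(fst q, 1::nat), (snd q, 2::nat)}"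
      then have "((fst p, 1::nat) = (fst q, 1) \<and> (snd p, 2::nat) = (snd q, 2)) \<or>
                 ((fst p, 1::nat) = (snd q, 2) \<and> (snd p, 2::nat) = (fst q, 1))"
        by (simp only: doubleton_eq_iff)
      then show "p = q" by (simp add: prod_eq_iff)
    qed
    have "(\<lambda>p. {(fst p, 1::nat), (snd p, 2::nat)}) ` PB = boundary (cover_V V) (cover_E E) S"
    proof
      show "(\<lambda>p. {(fst p, 1::nat), (snd p, 2::nat)}) ` PB \<subseteq> boundary (cover_V V) (cover_E E) S"
      proof
        fix e assume "e \<in> (\<lambda>p. {(fst p, 1::nat), (snd p, 2::nat)}) ` PB"
        then obtain p where p: "p \<in> PB" "e = {(fst p, 1::nat), (snd p, 2::nat)}" by blast
        obtain a b where pab: "p = (a, b)" by (cases p)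
        have ab: "e = {(a,1),(b,2)}" "a \<in> V" "b \<in> V" "{a,b} \<in> E" "(a \<in> L) \<noteq> (b \<in> R)"
          using p pab unfolding PB_def by auto
        have ec: "e \<in> cover_E E" unfolding cover_E_def using ab(1,4) by blast
        have a1: "(a, 1::nat) \<in> cover_V V" "(b, 2::nat) \<in> cover_V V"
          using ab(2,3) unfolding cover_V_def by auto
        show "e \<in> boundary (cover_V V) (cover_E E) S"
        proof (cases "a \<in> L")
          case True
          then have "(a,1) \<in> S" "(b,2) \<notin> S" using ab(5) unfolding L_def R_def by auto
          then show ?thesis using ab(1) ec a1 unfolding boundary_def by blast
        next
          case False
          then have "b \<in> R" using ab by auto
          then have "(b,2) \<in> S" "(a,1) \<notin> S" using False unfolding L_def R_def by auto
          moreover have "e = {(b,2),(a,1)}" using ab(1) by (simp add: insert_commute)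
          ultimately show ?thesis using ec a1 unfolding boundary_def by blast
        qed
      qed
      show "boundary (cover_V V) (cover_E E) S \<subseteq> (\<lambda>p. {(fst p, 1::nat), (snd p, 2::nat)}) ` PB"
      proof
        fix e assume e: "e \<in> boundary (cover_V V) (cover_E E) S"
        then have "e \<in> cover_E E" unfolding boundary_def by blast
        then obtain a b where ab: "e = {(a,1),(b,2)}" "{a,b} \<in> E"
          unfolding cover_E_def by blast
        have abV: "a \<in> V" "b \<in> V" using ug_end[OF u ab(2)] by auto
        obtain x y where xy: "x \<in> S" "y \<notin> S" "e = {x, y}"
          using e unfolding boundary_def by blast
        have "(x = (a,1) \<and> y = (b,2)) \<or> (x = (b,2) \<and> y = (a,1))"
          using xy(3) ab(1) by (simp add: doubleton_eq_iff) blast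
        then have "(a \<in> L) \<noteq> (b \<in> R)"
          using xy(1,2) unfolding L_def R_def by auto
        then have "(a, b) \<in> PB" unfolding PB_def using abV ab by auto
        then show "e \<in> (\<lambda>p. {(fst p, 1::nat), (snd p, 2::nat)}) ` PB"
          using ab(1) by (intro rev_image_eqI[of "(a, b)"]) auto
      qed
    qed
    then show ?thesis using card_image[OF inj] by simp
  qed
  have finVH: "finite (cover_V V)" unfolding cover_V_def using finV by simp
  have volVH: "vol (cover_E E) (cover_V V) = 2 * vol E V"
  proof -
    have "vol (cover_E E) (cover_V V) = sum (\<lambda>x. deg E (fst x)) (V \<times> {1::nat, 2})"
      unfolding vol_def using degH[OF u] by (auto intro!: sum.cong simp: cover_V_def)
    also have "\<dots> = sum (\<lambda>v. sum (\<lambda>i. deg E v) {1::nat, 2}) V"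
      by (subst sum.cartesian_product) (simp add: case_prod_beta)
    finally show ?thesis unfolding vol_def by (simp add: sum_distrib_left mult_2)
  qed
  have split: "vol (cover_E E) (cover_V V) = vol (cover_E E) (cover_V V - S) + vol (cover_E E) S"
    unfolding vol_def using sum.subset_diff[OF assms(2) finVH] .
  have "vol E (L \<union> R) \<le> vol E V" unfolding vol_def
    using LV RV finV by (intro sum_mono2) auto
  then have mn: "min (vol (cover_E E) S) (vol (cover_E E) (cover_V V - S)) = vol (cover_E E) S"
    using volS volVH split by simp
  have pos: "card PB + 2 * card PE > 0" using assms(5) volS volLR vL vR c1 by simp
  have "conductance (cover_V V) (cover_E E) S = real (card PB) / real (card PB + 2 * card PE)"
    unfolding conductance_def mn using volS volLR vL vR c1 bB by simp
  moreover have "beta E L R = 1 - 2 * real (card PE) / real (card PB + 2 * card PE)"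
    unfolding beta_def using volLR vL vR c1 eE by simp
  moreover have "1 - 2 * real (card PE) / real (card PB + 2 * card PE)
      = real (card PB) / real (card PB + 2 * card PE)"
  proof -
    have d: "real (card PB + 2 * card PE) > 0" using pos by linarith
    have "1 - 2 * real (card PE) / real (card PB + 2 * card PE)
      = (real (card PB + 2 * card PE) - 2 * real (card PE)) / real (card PB + 2 * card PE)"
      by (rule aux[OF d])
    then show ?thesis by simp
  qed
  ultimately show ?thesis unfolding L_def R_def by simp
qed

end
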